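(* Let $F$ be the fractal cube defined in the context, and let $Q=\{\mathcal K_\alpha:\alpha\in\{0,1\}^\infty\}\subset C(\mathbb R^3)$ be the set of its connected components. Then $Q$ is the self-similar set (attractor) in $C(\mathbb R^3)$ generated by the two contractions $\widetilde T_0,\widetilde T_1$, i.e. $Q=\widetilde T_0(Q)\cup\widetilde T_1(Q)$. Moreover there is a Hölder homeomorphism $\varphi:Q\to C_{1/3}$ onto the middle-third Cantor set $C_{1/3}\subset[0,1]$ which induces an isomorphism of the self-similar structures, i.e. $\varphi\circ\widetilde T_0=S_0\circ\varphi$ and $\varphi\circ\widetilde T_1=S_1\circ\varphi$ on $Q$, where $S_0(x)=x/3$ and $S_1(x)=x/3+2/3$.
   Context: Let $I=[0,1]^3$. Let $\mathcal D_0=\{(i,2,2),(2,i,2),(2,2,i): i=0,1,2,3,4\}\subset\{0,\ldots,4\}^3$ (the "Cross", $13$ elements) and $\mathcal D_1=\{d\in\{0,\ldots,4\}^3:\ \text{at least two coordinates of } d \text{ lie in }\{0,4\}\}$ (the "Frame": the $44$ unit cubes lying along the edges of $[0,5]^3$). Put $\mathcal D=\mathcal D_0\cup\mathcal D_1$ (a disjoint union) and let $F\subset\mathbb R^3$ be the unique non-empty compact set with $F=\frac{F+\mathcal D}{5}=\bigcup_{d\in\mathcal D}\frac{F+d}{5}$. For $i=0,1$ define the Hutchinson operator $T_i(A)=\frac{\mathcal D_i+A}{5}=\bigcup_{d\in\mathcal D_i}\frac{d+A}{5}$ on sets $A\subset\mathbb R^3$, and for a finite word $\alpha_1\cdots\alpha_k\in\{0,1\}^k$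 put $T_{\alpha_1\cdots\alpha_k}=T_{\alpha_1}\circ\cdots\circ T_{\alpha_k}$. For an infinite word $\alpha=\alpha_1\alpha_2\ldots\in\{0,1\}^\infty$ put $\mathcal K_\alpha=\bigcap_{k\ge1}T_{\alpha_1\cdots\alpha_k}(I)$; each $\mathcal K_\alpha$ is a connected component of $F$ and $F=\bigcup_{\alpha}\mathcal K_\alpha$. $C(\mathbb R^3)$ denotes the hyperspace of non-empty compact subsets of $\mathbb R^3$ with the Hausdorff metric, and $\widetilde T_i:C(\mathbb R^3)\to C(\mathbb R^3)$, $\widetilde T_i(A)=T_i(A)$, is a contraction with Lipschitz constant $1/5$. *)

theory Defs
  imports "HOL-Analysis.Analysis"
begin

definition grid5 :: "(real^3) set" where
  "grid5 = {x. \<forall>k. x$k \<in> real ` {0..4::nat}}"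

definition Dcross :: "(real^3) set" where
  "Dcross = {x \<in> grid5. \<exists>k. \<forall>j. j \<noteq> k \<longrightarrow> x$j = 2}"

definition Dframe :: "(real^3) set" where
  "Dframe = {x \<in> grid5. \<exists>k1 k2. k1 \<noteq> k2 \<and> x$k1 \<in> {0,4} \<and> x$k2 \<in> {0,4}}"

definition Dig :: "nat \<Rightarrow> (real^3) set" where
  "Dig i = (if i = 0 then Dcross else Dframe)"

definition Tmap :: "nat \<Rightarrow> (real^3) set \<Rightarrow> (real^3) set" where
  "Tmap i A = (\<Union>d\<in>Dig i. (\<lambda>a. (1/5) *\<^sub>R (d + a)) ` A)"

fun Tword :: "nat list \<Rightarrow> (real^3) set \<Rightarrow> (real^3) set" where
  "Tword [] A = A"
| "Tword (i # w) A = Tmap i (Tword w A)"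

definition unit_cube :: "(real^3) set" where
  "unit_cube = {x. \<forall>k. 0 \<le> x$k \<and> x$k \<le> 1}"

text \<open>K_alpha for an infinite 0/1-word alpha :: nat => nat (alpha 0 is the first letter).\<close>
definition Kcomp :: "(nat \<Rightarrow> nat) \<Rightarrow> (real^3) set" where
  "Kcomp \<alpha> = (\<Inter>k\<in>{1..}. Tword (map \<alpha> [0..<k]) unit_cube)"

definition Qcomp :: "(real^3) set set" where
  "Qcomp = {Kcomp \<alpha> | \<alpha>. \<forall>n. \<alpha> n \<in> {0,1}}"

definition cantor_set :: "real set" where
  "cantor_set = {(\<Sum>n. 2 * real (a n) / 3 ^ Suc n) | a. \<forall>n. a n \<in> {0,1::nat}}"

text \<open>Hausdorff distance between non-empty compact subsets (used only on such sets).\<close>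
definition hausdist :: "(real^3) set \<Rightarrow> (real^3) set \<Rightarrow> real" where
  "hausdist A B = max (SUP a\<in>A. setdist {a} B) (SUP b\<in>B. setdist {b} A)"

end

theory Submission
  imports Defs
begin

lemma grid5_finite: "finite grid5"
proof -
  let ?S = "real ` {0..4::nat}"
  have "grid5 \<subseteq> vec_lambda ` (PiE UNIV (\<lambda>_. ?S))"
  proof
    fix x assume "x \<in> grid5"
    then have "vec_nth x \<in> PiE UNIV (\<lambda>_. ?S)" unfolding grid5_def by auto
    then show "x \<in> vec_lambda ` (PiE UNIV (\<lambda>_. ?S))"
      by (metis image_eqI vec_nth_inverse)
  qed
  moreover have "finite (PiE (UNIV::3 set) (\<lambda>_. ?S))" by (intro finite_PiE) auto
  ultimately show ?thesis using finite_subset by blast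
qed

lemma Dig_finite: "finite (Dig i)"
  using grid5_finite unfolding Dig_def Dcross_def Dframe_def by auto

lemma Dig_grid: "d \<in> Dig i \<Longrightarrow> d \<in> grid5"
  unfolding Dig_def Dcross_def Dframe_def by (auto split: if_splits)

lemma grid_comp: "d \<in> grid5 \<Longrightarrow> d$k \<in> \<int> \<and> 0 \<le> d$k \<and> d$k \<le> 4"
proof -
  assume "d \<in> grid5"
  then obtain n where "d$k = real n" "n \<le> 4" unfolding grid5_def by force
  then show ?thesis by auto
qed

lemma cross_in: "(\<chi> k. 2) \<in> Dig 0"
proof -
  have "(2::real) \<in> real ` {0..4::nat}" by (rule image_eqI[where x=2]) auto
  then show ?thesis unfolding Dig_def Dcross_def grid5_def by simp
qed

lemma frame_in: "(\<chi> k. 0) \<in> Dframe"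
proof -
  have "(0::real) \<in> real ` {0..4::nat}" by (rule image_eqI[where x=0]) auto
  moreover have "(1::3) \<noteq> 2" by simp
  ultimately show ?thesis unfolding Dframe_def grid5_def by fastforce
qed

lemma Dig_ne: "Dig i \<noteq> {}"
  using cross_in frame_in unfolding Dig_def by (auto split: if_splits)

lemma Tword_rep: "\<exists>M. finite M \<and> M \<noteq> {} \<and> (\<forall>m\<in>M. \<forall>k. m$k \<in> \<int>) \<and>
   (\<forall>X. Tword u X = (\<Union>m\<in>M. (\<lambda>x. (1/5^length u) *\<^sub>R (m + x)) ` X))"
proof (induction u)
  case Nil
  show ?case by (rule exI[where x="{0}"]) auto
next
  case (Cons i u)
  then obtain M where M: "finite M" "M \<noteq> {}" "\<forall>m\<in>M. \<forall>k. m$k \<in> \<int>"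
    "\<And>X. Tword u X = (\<Union>m\<in>M. (\<lambda>x. (1/5^length u) *\<^sub>R (m + x)) ` X)" by blast
  define n where "n = length u"
  define M' where "M' = (\<lambda>(d,m). (5^n) *\<^sub>R d + m) ` (Dig i \<times> M)"
  have eq: "(1/5) *\<^sub>R (d + (1/5^n) *\<^sub>R (m + x)) = (1/5^Suc n) *\<^sub>R (((5^n) *\<^sub>R d + m) + x)"
    for d m x :: "real^3"
    by (simp add: scaleR_add_right field_simps)
  have "finite M'" unfolding M'_def using M(1) Dig_finite by auto
  moreover have "M' \<noteq> {}" unfolding M'_def using M(2) Dig_ne by auto
  moreover have "\<forall>m\<in>M'. \<forall>k. m$k \<in> \<int>"
    unfolding M'_def using M(3) Dig_grid grid_comp by auto
  moreover have "Tword (i#u) X = (\<Union>m\<in>M'. (\<lambda>x. (1/5^length (i#u)) *\<^sub>R (m + x)) ` X)" for X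
  proof -
    have "Tword (i#u) X = (\<Union>d\<in>Dig i. (\<lambda>a. (1/5) *\<^sub>R (d + a)) ` (\<Union>m\<in>M. (\<lambda>x. (1/5^n) *\<^sub>R (m + x)) ` X))"
      by (simp add: Tmap_def M(4) n_def)
    also have "\<dots> = (\<Union>(d,m)\<in>Dig i \<times> M. (\<lambda>x. (1/5^Suc n) *\<^sub>R (((5^n) *\<^sub>R d + m) + x)) ` X)"
      unfolding eq[symmetric] by auto
    also have "\<dots> = (\<Union>m\<in>M'. (\<lambda>x. (1/5^Suc n) *\<^sub>R (m + x)) ` X)"
      unfolding M'_def by auto
    finally show ?thesis by (simp add: n_def)
  qed
  ultimately show ?case by blast
qed

lemma Tmap_mono: "X \<subseteq> Y \<Longrightarrow> Tmap i X \<subseteq> Tmap i Y"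
  unfolding Tmap_def by auto

lemma Tword_mono': "X \<subseteq> Y \<Longrightarrow> Tword u X \<subseteq> Tword u Y"
proof (induction u)
  case (Cons i u) then show ?case using Tmap_mono by simp
qed simp

lemma Tword_append: "Tword (u @ v) X = Tword u (Tword v X)"
  by (induction u) auto

lemma Tmap_sub: "Tmap i unit_cube \<subseteq> unit_cube"
proof
  fix y assume "y \<in> Tmap i unit_cube"
  then obtain d x where d: "d \<in> Dig i" and x: "x \<in> unit_cube" and y: "y = (1/5) *\<^sub>R (d + x)"
    unfolding Tmap_def by auto
  have "0 \<le> y$k \<and> y$k \<le> 1" for k
  proof -
    have "0 \<le> x$k" "x$k \<le> 1" using x unfolding unit_cube_def by auto
    moreover have "0 \<le> d$k" "d$k \<le> 4" using grid_comp[OF Dig_grid[OF d], of k] by blast+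
    ultimately show ?thesis unfolding y by simp
  qed
  then show "y \<in> unit_cube" unfolding unit_cube_def by auto
qed


lemma Union_img_Inter:
  assumes M: "finite M" and inj: "\<And>m. inj (f m)" and dec: "\<And>k. A (Suc k) \<subseteq> A k"
  shows "(\<Union>m\<in>M. f m ` (\<Inter>k. A k)) = (\<Inter>k. \<Union>m\<in>M. f m ` A k)"
proof
  show "(\<Union>m\<in>M. f m ` (\<Inter>k. A k)) \<subseteq> (\<Inter>k. \<Union>m\<in>M. f m ` A k)" by blast
next
  show "(\<Inter>k. \<Union>m\<in>M. f m ` A k) \<subseteq> (\<Union>m\<in>M. f m ` (\<Inter>k. A k))"
  proof
    fix x assume x: "x \<in> (\<Inter>k. \<Union>m\<in>M. f m ` A k)"
    have "\<exists>m\<in>M. \<forall>k. x \<in> f m ` A k"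
    proof (rule ccontr)
      assume "\<not> ?thesis"
      then have "\<forall>m\<in>M. \<exists>k. x \<notin> f m ` A k" by blast
      then obtain km where km: "\<And>m. m \<in> M \<Longrightarrow> x \<notin> f m ` A (km m)" by metis
      define K where "K = Max (km ` M)"
      from x obtain m where m: "m \<in> M" "x \<in> f m ` A K" by blast
      have "km m \<le> K" unfolding K_def using M m(1) by auto
      then have "A K \<subseteq> A (km m)" using lift_Suc_antimono_le[of A, OF dec] by blast
      then show False using km[OF m(1)] m(2) by blast
    qed
    then obtain m where m: "m \<in> M" "\<And>k. x \<in> f m ` A k" by blast
    obtain y where y: "y \<in> A 0" "x = f m y" using m(2)[of 0] by blast
    have "y \<in> A k" for k
    proof -
      obtain z where "z \<in> A k" "x = f m z" using m(2)[of k] by blast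
      then show ?thesis using y inj[of m] by (metis injD)
    qed
    then show "x \<in> (\<Union>m\<in>M. f m ` (\<Inter>k. A k))" using m(1) y(2) by blast
  qed
qed


definition Kp :: "(nat \<Rightarrow> nat) \<Rightarrow> (real^3) set" where
  "Kp \<alpha> = (\<Inter>k. Tword (map \<alpha> [0..<k]) unit_cube)"

lemma Kdec: "Tword (map \<alpha> [0..<Suc k]) unit_cube \<subseteq> Tword (map \<alpha> [0..<k]) unit_cube"
  using Tword_mono'[OF Tmap_sub] by (simp add: Tword_append)

lemma Kcomp_Kp: "Kcomp \<alpha> = Kp \<alpha>"
proof -
  have "(\<Inter>k\<in>{1..}. Tword (map \<alpha> [0..<k]) unit_cube) = (\<Inter>k. Tword (map \<alpha> [0..<k]) unit_cube)"
  proof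
    show "(\<Inter>k\<in>{1..}. Tword (map \<alpha> [0..<k]) unit_cube) \<subseteq> (\<Inter>k. Tword (map \<alpha> [0..<k]) unit_cube)"
    proof
      fix x assume x: "x \<in> (\<Inter>k\<in>{1..}. Tword (map \<alpha> [0..<k]) unit_cube)"
      have "x \<in> Tword (map \<alpha> [0..<k]) unit_cube" for k
      proof (cases k)
        case 0
        have "x \<in> Tword (map \<alpha> [0..<1]) unit_cube" using x by (metis INT_E atLeast_iff order_refl)
        then show ?thesis using 0 Kdec[of \<alpha> 0] by auto
      next
        case (Suc n) then show ?thesis using x by (metis INT_E atLeast_iff le_add1 plus_1_eq_Suc)
      qed
      then show "x \<in> (\<Inter>k. Tword (map \<alpha> [0..<k]) unit_cube)" by blast
    qed
  qed auto
  then show ?thesis unfolding Kcomp_def Kp_def by simp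
qed


lemma Inter_shift:
  assumes dec: "\<And>k. G (Suc k) \<subseteq> (G k :: 'a set)"
  shows "(\<Inter>k. G (n + k)) = (\<Inter>k. G k)"
proof
  show "(\<Inter>k. G (n + k)) \<subseteq> (\<Inter>k. G k)"
  proof
    fix x assume x: "x \<in> (\<Inter>k. G (n + k))"
    have "x \<in> G k" for k
      using x lift_Suc_antimono_le[of G, OF dec, of k "n+k"] by auto
    then show "x \<in> (\<Inter>k. G k)" by blast
  qed
qed auto


lemma Kp_split: "Kp \<alpha> = Tword (map \<alpha> [0..<n]) (Kp (\<lambda>k. \<alpha> (n + k)))"
proof -
  obtain M where M: "finite M" "M \<noteq> {}"
    "\<And>X. Tword (map \<alpha> [0..<n]) X = (\<Union>m\<in>M. (\<lambda>x. (1/5^n) *\<^sub>R (m + x)) ` X)"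
    using Tword_rep[of "map \<alpha> [0..<n]"] by auto
  define B where "B k = Tword (map (\<lambda>k. \<alpha> (n + k)) [0..<k]) unit_cube" for k
  have decB: "B (Suc k) \<subseteq> B k" for k unfolding B_def by (rule Kdec)
  have inj: "inj (\<lambda>x::real^3. (1/5^n) *\<^sub>R (m + x))" for m
    by (rule injI) simp
  have "Tword (map \<alpha> [0..<n]) (Kp (\<lambda>k. \<alpha> (n + k))) = (\<Union>m\<in>M. (\<lambda>x. (1/5^n) *\<^sub>R (m + x)) ` (\<Inter>k. B k))"
    unfolding M(3) Kp_def B_def ..
  also have "\<dots> = (\<Inter>k. \<Union>m\<in>M. (\<lambda>x. (1/5^n) *\<^sub>R (m + x)) ` B k)"
    by (rule Union_img_Inter[OF M(1) inj, of B, OF decB])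
  also have "\<dots> = (\<Inter>k. Tword (map \<alpha> [0..<n + k]) unit_cube)"
  proof -
    have "map \<alpha> [0..<n + k] = map \<alpha> [0..<n] @ map (\<lambda>k. \<alpha> (n + k)) [0..<k]" for k
      by (rule nth_equalityI) (auto simp: nth_append)
    then show ?thesis unfolding B_def M(3)[symmetric] by (simp add: Tword_append)
  qed
  also have "\<dots> = Kp \<alpha>" unfolding Kp_def by (rule Inter_shift[of "\<lambda>k. Tword (map \<alpha> [0..<k]) unit_cube", OF Kdec])
  finally show ?thesis ..
qed


lemma unit_cube_cbox: "unit_cube = cbox (vec 0) (vec 1)"
  by (auto simp: unit_cube_def mem_box_cart)

lemma unit_cube_compact: "compact unit_cube"
  by (simp add: unit_cube_cbox)

lemma zero_in_cube: "0 \<in> unit_cube"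
  by (simp add: unit_cube_def)

lemma Tword_compact: "compact X \<Longrightarrow> compact (Tword u X)"
proof -
  assume X: "compact X"
  obtain M where M: "finite M"
    "\<And>X. Tword u X = (\<Union>m\<in>M. (\<lambda>x. (1/5^length u) *\<^sub>R (m + x)) ` X)"
    using Tword_rep[of u] by auto
  have "compact ((\<lambda>x. (1/5^length u) *\<^sub>R (m + x)) ` X)" for m
    by (intro compact_continuous_image X continuous_intros)
  then show ?thesis unfolding M(2) using M(1) by blast
qed

lemma Tword_ne: "X \<noteq> {} \<Longrightarrow> Tword u X \<noteq> {}"
proof -
  assume X: "X \<noteq> {}"
  obtain M where M: "M \<noteq> {}"
    "\<And>X. Tword u X = (\<Union>m\<in>M. (\<lambda>x. (1/5^length u) *\<^sub>R (m + x)) ` X)"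
    using Tword_rep[of u] by auto
  then show ?thesis using X by auto
qed


lemma Kp_sub: "Kp \<alpha> \<subseteq> unit_cube"
proof -
  have "Kp \<alpha> \<subseteq> Tword (map \<alpha> [0..<0]) unit_cube" unfolding Kp_def by blast
  then show ?thesis by simp
qed

lemma Kp_compact: "compact (Kp \<alpha>)"
proof -
  have "closed (Kp \<alpha>)" unfolding Kp_def
    by (intro closed_INT ballI compact_imp_closed Tword_compact unit_cube_compact)
  moreover have "bounded (Kp \<alpha>)"
    by (rule bounded_subset[OF compact_imp_bounded[OF unit_cube_compact] Kp_sub])
  ultimately show ?thesis by (simp add: compact_eq_bounded_closed)
qed

lemma Kp_ne: "Kp \<alpha> \<noteq> {}"
proof -
  let ?F = "\<lambda>k. Tword (map \<alpha> [0..<k]) unit_cube"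
  have "\<Inter>(range ?F) \<noteq> {}"
  proof (rule compact_nest)
    show "compact (?F n)" for n by (intro Tword_compact unit_cube_compact)
    show "?F n \<noteq> {}" for n using zero_in_cube by (intro Tword_ne) auto
    show "?F n \<subseteq> ?F m" if "m \<le> n" for m n
      using lift_Suc_antimono_le[of ?F, OF Kdec that] .
  qed
  then show ?thesis unfolding Kp_def by simp
qed


lemma Tword_single: "Tword [i] X = Tmap i X" by simp

lemma Kp_head: "Kp \<alpha> = Tmap (\<alpha> 0) (Kp (\<lambda>k. \<alpha> (Suc k)))"
  using Kp_split[of \<alpha> 1] by simp

lemma Tmap_Kp: "Tmap i (Kp \<alpha>) = Kp (case_nat i \<alpha>)"
  using Kp_head[of "case_nat i \<alpha>"] by simp

lemma haus_ge:
  assumes A: "compact A" and B: "compact B" "B \<noteq> {}" and a: "a \<in> A"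
    and r: "\<And>b. b \<in> B \<Longrightarrow> r \<le> dist a b"
  shows "r \<le> hausdist A B"
proof -
  have "r \<le> setdist {a} B" by (rule le_setdistI) (use B r in auto)
  also have "bdd_above ((\<lambda>a. setdist {a} B) ` A)"
    by (intro bounded_imp_bdd_above compact_imp_bounded compact_continuous_image A continuous_on_setdist)
  then have "setdist {a} B \<le> (SUP a\<in>A. setdist {a} B)" by (rule cSUP_upper[OF a])
  also have "\<dots> \<le> hausdist A B" unfolding hausdist_def by simp
  finally show ?thesis .
qed

lemma haus_le:
  assumes "A \<noteq> {}" "B \<noteq> {}"
    and "\<And>a. a \<in> A \<Longrightarrow> \<exists>b\<in>B. dist a b \<le> r"
    and "\<And>b. b \<in> B \<Longrightarrow> \<exists>a\<in>A. dist b a \<le> r"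
  shows "hausdist A B \<le> r"
proof -
  have "(SUP a\<in>A. setdist {a} B) \<le> r"
  proof (rule cSUP_least[OF assms(1)])
    fix a assume "a \<in> A"
    then obtain b where "b \<in> B" "dist a b \<le> r" using assms(3) by blast
    then show "setdist {a} B \<le> r" using setdist_le_dist[of a "{a}" b B] by auto
  qed
  moreover have "(SUP b\<in>B. setdist {b} A) \<le> r"
  proof (rule cSUP_least[OF assms(2)])
    fix b assume "b \<in> B"
    then obtain a where "a \<in> A" "dist b a \<le> r" using assms(4) by blast
    then show "setdist {b} A \<le> r" using setdist_le_dist[of b "{b}" a A] by auto
  qed
  ultimately show ?thesis unfolding hausdist_def by simp
qed

lemma haus_self: "A \<noteq> {} \<Longrightarrow> hausdist A A \<le> 0"
  by (rule haus_le) auto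

lemma haus_comm: "hausdist A B = hausdist B A"
  unfolding hausdist_def by (simp add: max.commute)

lemma cube_dist: "x \<in> unit_cube \<Longrightarrow> y \<in> unit_cube \<Longrightarrow> dist x y \<le> 3"
proof -
  assume x: "x \<in> unit_cube" and y: "y \<in> unit_cube"
  have "dist x y = norm (x - y)" by (simp add: dist_norm)
  also have "\<dots> \<le> (\<Sum>i\<in>UNIV. \<bar>(x - y)$i\<bar>)" by (rule norm_le_l1_cart)
  also have "\<dots> \<le> of_nat (card (UNIV::3 set)) * 1"
  proof (rule sum_bounded_above)
    fix i :: 3
    show "\<bar>(x - y)$i\<bar> \<le> 1" using x y unfolding unit_cube_def by (auto simp: abs_le_iff) (smt (verit))+
  qed
  finally show ?thesis by simp
qed

lemma dist_scale: "dist ((c::real) *\<^sub>R (m + x)) (c *\<^sub>R (m + y)) = \<bar>c\<bar> * dist x (y::real^3)"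
proof -
  have "c *\<^sub>R (m + x) - c *\<^sub>R (m + y) = c *\<^sub>R (x - y)" by (simp add: algebra_simps)
  then show ?thesis by (simp add: dist_norm)
qed

lemma Kp_upper:
  assumes "\<forall>i<n. \<alpha> i = \<beta> i"
  shows "hausdist (Kp \<alpha>) (Kp \<beta>) \<le> 3 / 5^n"
proof -
  have u: "map \<alpha> [0..<n] = map \<beta> [0..<n]" using assms by simp
  obtain M where M:
    "\<And>X. Tword (map \<alpha> [0..<n]) X = (\<Union>m\<in>M. (\<lambda>x. (1/5^n) *\<^sub>R (m + x)) ` X)"
    using Tword_rep[of "map \<alpha> [0..<n]"] by auto
  define A' where "A' = Kp (\<lambda>k. \<alpha> (n + k))"
  define B' where "B' = Kp (\<lambda>k. \<beta> (n + k))"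
  have A: "Kp \<alpha> = (\<Union>m\<in>M. (\<lambda>x. (1/5^n) *\<^sub>R (m + x)) ` A')"
    using Kp_split[of \<alpha> n] M unfolding A'_def by simp
  have B: "Kp \<beta> = (\<Union>m\<in>M. (\<lambda>x. (1/5^n) *\<^sub>R (m + x)) ` B')"
    using Kp_split[of \<beta> n] M u unfolding B'_def by simp
  obtain x0 where x0: "x0 \<in> A'" using Kp_ne unfolding A'_def by blast
  obtain y0 where y0: "y0 \<in> B'" using Kp_ne unfolding B'_def by blast
  have sA: "A' \<subseteq> unit_cube" "B' \<subseteq> unit_cube" unfolding A'_def B'_def by (rule Kp_sub)+
  have key: "dist ((1/5^n) *\<^sub>R (m + x)) ((1/5^n) *\<^sub>R (m + y)) \<le> 3/5^n"
    if "x \<in> unit_cube" "y \<in> unit_cube" for m x y :: "real^3"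
    using cube_dist[OF that] unfolding dist_scale by (simp add: divide_right_mono)
  show ?thesis
  proof (rule haus_le)
    show "Kp \<alpha> \<noteq> {}" "Kp \<beta> \<noteq> {}" by (rule Kp_ne)+
  next
    fix a assume "a \<in> Kp \<alpha>"
    then obtain m x where "m \<in> M" "x \<in> A'" "a = (1/5^n) *\<^sub>R (m + x)" unfolding A by blast
    then show "\<exists>b\<in>Kp \<beta>. dist a b \<le> 3/5^n"
      using key[of x y0 m] sA y0 unfolding B by blast
  next
    fix b assume "b \<in> Kp \<beta>"
    then obtain m y where "m \<in> M" "y \<in> B'" "b = (1/5^n) *\<^sub>R (m + y)" unfolding B by blast
    then show "\<exists>a\<in>Kp \<alpha>. dist b a \<le> 3/5^n"
      using key[of y x0 m] sA x0 unfolding A by blast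
  qed
qed


lemma coord_sep:
  fixes x y m0 m :: "real^3"
  assumes x: "\<And>k. 2/5 \<le> x$k \<and> x$k \<le> 3/5" and y: "\<And>k. 0 \<le> y$k \<and> y$k \<le> 1"
    and m0: "\<And>k. m0$k \<in> \<int>" and m: "\<And>k. m$k \<in> \<int>"
    and fr: "\<exists>k. y$k \<le> 1/5 \<or> 4/5 \<le> y$k"
  shows "\<exists>k. 1/5 \<le> \<bar>(m0 + x)$k - (m + y)$k\<bar>"
proof (cases "m = m0")
  case True
  obtain k where k: "y$k \<le> 1/5 \<or> 4/5 \<le> y$k" using fr by blast
  have "1/5 \<le> \<bar>(m0 + x)$k - (m + y)$k\<bar>" using x[of k] k True by auto
  then show ?thesis by blast
next
  case False
  then obtain k where k: "m$k \<noteq> m0$k" by (auto simp: vec_eq_iff)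
  have "m0$k - m$k \<in> \<int>" using m0 m by (intro Ints_diff)
  then have "1 \<le> \<bar>m0$k - m$k\<bar>" using k by (intro Ints_nonzero_abs_ge1) auto
  moreover have "(m0 + x)$k - (m + y)$k = (m0$k - m$k) + (x$k - y$k)" by simp
  ultimately have "1/5 \<le> \<bar>(m0 + x)$k - (m + y)$k\<bar>" using x[of k] y[of k] by linarith
  then show ?thesis by blast
qed


lemma sep_core:
  assumes a0: "\<alpha> 0 = 0" and b0: "\<beta> 0 \<noteq> 0"
  shows "1/5^(Suc (length u)) \<le> hausdist (Tword u (Kp \<alpha>)) (Tword u (Kp \<beta>))"
proof -
  define n where "n = length u"
  obtain M where M: "M \<noteq> {}" "\<forall>m\<in>M. \<forall>k. m$k \<in> \<int>"
    "\<And>X. Tword u X = (\<Union>m\<in>M. (\<lambda>x. (1/5^n) *\<^sub>R (m + x)) ` X)"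
    using Tword_rep[of u] unfolding n_def by auto
  obtain m0 where m0: "m0 \<in> M" using M(1) by blast
  obtain x0 where x0: "x0 \<in> Kp (\<lambda>k. \<alpha> (Suc k))" using Kp_ne by blast
  define x where "x = (1/5) *\<^sub>R ((\<chi> k. 2) + x0)"
  have "x \<in> Tmap 0 (Kp (\<lambda>k. \<alpha> (Suc k)))" unfolding Tmap_def x_def
    by (rule UN_I[OF cross_in], rule imageI[OF x0])
  then have xK: "x \<in> Kp \<alpha>" using Kp_head[of \<alpha>] a0 by simp
  have x0c: "0 \<le> x0$k \<and> x0$k \<le> 1" for k using subsetD[OF Kp_sub x0] unfolding unit_cube_def by simp
  have xc: "2/5 \<le> x$k \<and> x$k \<le> 3/5" for k using x0c[of k] unfolding x_def by simp
  define a where "a = (1/5^n) *\<^sub>R (m0 + x)"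
  have aA: "a \<in> Tword u (Kp \<alpha>)" unfolding M(3) a_def by (rule UN_I[OF m0], rule imageI[OF xK])
  show ?thesis unfolding n_def[symmetric]
  proof (rule haus_ge[OF Tword_compact[OF Kp_compact] Tword_compact[OF Kp_compact] Tword_ne[OF Kp_ne] aA])
    fix b assume "b \<in> Tword u (Kp \<beta>)"
    then obtain m y where m: "m \<in> M" and y: "y \<in> Kp \<beta>" and b: "b = (1/5^n) *\<^sub>R (m + y)"
      unfolding M(3) by blast
    have yc: "0 \<le> y$k \<and> y$k \<le> 1" for k using subsetD[OF Kp_sub y] unfolding unit_cube_def by simp
    have "y \<in> Tmap (\<beta> 0) (Kp (\<lambda>k. \<beta> (Suc k)))" using y Kp_head[of \<beta>] by simp
    then obtain d z where d: "d \<in> Dframe" and z: "z \<in> Kp (\<lambda>k. \<beta> (Suc k))"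
      and yz: "y = (1/5) *\<^sub>R (d + z)"
      using b0 unfolding Tmap_def Dig_def by auto
    obtain k1 where k1: "d$k1 \<in> {0,4}" using d unfolding Dframe_def by blast
    have zc: "0 \<le> z$k1 \<and> z$k1 \<le> 1" using subsetD[OF Kp_sub z] unfolding unit_cube_def by simp
    have fr: "\<exists>k. y$k \<le> 1/5 \<or> 4/5 \<le> y$k"
      using k1 zc unfolding yz by (intro exI[of _ k1]) auto
    obtain k where k: "1/5 \<le> \<bar>(m0 + x)$k - (m + y)$k\<bar>"
      using coord_sep[of x y m0 m] xc yc M(2) m0 m fr by blast
    have "1/5^Suc n = (1/5^n) * (1/5::real)" by simp
    also have "\<dots> \<le> (1/5^n) * \<bar>(m0 + x)$k - (m + y)$k\<bar>"
      using k by (intro mult_left_mono) auto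
    also have "\<dots> = \<bar>(a - b)$k\<bar>"
    proof -
      have "(a - b)$k = (1/5^n) * ((m0 + x)$k - (m + y)$k)" unfolding a_def b
        by (simp add: diff_divide_distrib add_divide_distrib)
      then show ?thesis by (simp add: abs_mult)
    qed
    also have "\<dots> \<le> norm (a - b)" by (rule component_le_norm_cart)
    finally show "1/5^Suc n \<le> dist a b" by (simp add: dist_norm)
  qed
qed


lemma sep_Kp:
  assumes agree: "\<forall>i<j. \<alpha> i = \<beta> i" and a0: "\<alpha> j = 0" and b0: "\<beta> j \<noteq> 0"
  shows "1/5^(Suc j) \<le> hausdist (Kp \<alpha>) (Kp \<beta>)"
proof -
  have u: "map \<alpha> [0..<j] = map \<beta> [0..<j]" using agree by simp
  have "1/5^(Suc (length (map \<alpha> [0..<j]))) \<le>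
     hausdist (Tword (map \<alpha> [0..<j]) (Kp (\<lambda>k. \<alpha> (j + k)))) (Tword (map \<alpha> [0..<j]) (Kp (\<lambda>k. \<beta> (j + k))))"
    by (rule sep_core) (use a0 b0 in auto)
  then show ?thesis using Kp_split[of \<alpha> j] Kp_split[of \<beta> j] u by simp
qed




lemma geo_tail: "(\<lambda>k. 2 / 3 ^ Suc (k + m) :: real) sums (1/3^m)"
proof -
  have "(\<lambda>k. (1/3::real)^k) sums (1 / (1 - 1/3))" by (rule geometric_sums) simp
  then have "(\<lambda>k. (2/3^Suc m) * (1/3::real)^k) sums ((2/3^Suc m) * (1 / (1 - 1/3)))"
    by (rule sums_mult)
  moreover have "(2/3^Suc m) * (1 / (1 - 1/3)) = (1/3^m :: real)" by simp
  moreover have "(2/3^Suc m) * (1/3::real)^k = 2 / 3 ^ Suc (k + m)" for k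
    by (simp add: power_add power_one_over field_simps)
  ultimately show ?thesis by simp
qed


lemma tail_bound:
  fixes e :: "nat \<Rightarrow> real"
  assumes e: "\<And>n. \<bar>e n\<bar> \<le> 1"
  shows "summable (\<lambda>k. 2 * e (k + m) / 3 ^ Suc (k + m))"
    and "\<bar>\<Sum>k. 2 * e (k + m) / 3 ^ Suc (k + m)\<bar> \<le> 1/3^m"
proof -
  have b: "\<bar>2 * e (k + m) / 3 ^ Suc (k + m)\<bar> \<le> 2 / 3 ^ Suc (k + m)" for k
    using e[of "k+m"] by (simp add: abs_mult divide_right_mono)
  have sg: "summable (\<lambda>k. 2 / 3 ^ Suc (k + m) :: real)" using geo_tail sums_summable by blast
  have sa: "summable (\<lambda>k. \<bar>2 * e (k + m) / 3 ^ Suc (k + m)\<bar>)"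
    by (rule summable_comparison_test[OF _ sg]) (use b in auto)
  then show "summable (\<lambda>k. 2 * e (k + m) / 3 ^ Suc (k + m))" by (rule summable_rabs_cancel)
  have "\<bar>\<Sum>k. 2 * e (k + m) / 3 ^ Suc (k + m)\<bar> \<le> (\<Sum>k. \<bar>2 * e (k + m) / 3 ^ Suc (k + m)\<bar>)"
    by (rule summable_rabs[OF sa])
  also have "\<dots> \<le> (\<Sum>k. 2 / 3 ^ Suc (k + m))" by (rule suminf_le[OF b sa sg])
  also have "\<dots> = 1/3^m" using geo_tail sums_unique by metis
  finally show "\<bar>\<Sum>k. 2 * e (k + m) / 3 ^ Suc (k + m)\<bar> \<le> 1/3^m" .
qed


definition code :: "(nat \<Rightarrow> nat) \<Rightarrow> real" where
  "code a = (\<Sum>n. 2 * real (a n) / 3 ^ Suc n)"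

definition valid :: "(nat \<Rightarrow> nat) \<Rightarrow> bool" where
  "valid a \<longleftrightarrow> (\<forall>n. a n \<in> {0,1})"

lemma code_summable: "valid a \<Longrightarrow> summable (\<lambda>n. 2 * real (a n) / 3 ^ Suc n)"
proof -
  assume v: "valid a"
  have "a n \<in> {0,1}" for n using v unfolding valid_def by blast
  then have "\<bar>real (a n)\<bar> \<le> 1" for n by (metis abs_of_nat insertE of_nat_le_1_iff order_refl empty_iff zero_le_one)
  from tail_bound(1)[of "\<lambda>n. real (a n)" 0, OF this] show ?thesis by simp
qed


lemma code_diff:
  assumes va: "valid \<alpha>" and vb: "valid \<beta>" and agree: "\<forall>n<j. \<alpha> n = \<beta> n"
  shows "\<bar>code \<alpha> - code \<beta>\<bar> \<le> 1/3^j"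
    and "\<alpha> j \<noteq> \<beta> j \<Longrightarrow> 1/3^(Suc j) \<le> \<bar>code \<alpha> - code \<beta>\<bar>"
proof -
  define e where "e n = real (\<alpha> n) - real (\<beta> n)" for n
  have ab: "\<alpha> n \<in> {0,1}" "\<beta> n \<in> {0,1}" for n using va vb unfolding valid_def by blast+
  have e: "\<bar>e n\<bar> \<le> 1" for n using ab[of n] unfolding e_def by auto
  define g where "g n = 2 * e n / 3 ^ Suc n" for n
  have sg: "summable g" using tail_bound(1)[OF e, where m=0] unfolding g_def by simp
  have "code \<alpha> - code \<beta> = suminf g"
    unfolding code_def g_def e_def
    unfolding suminf_diff[OF code_summable[OF va] code_summable[OF vb]]
    by (simp add: diff_divide_distrib right_diff_distrib)
  also have "\<dots> = (\<Sum>k. g (k + j))"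
  proof -
    have "(\<Sum>i<j. g i) = 0" using agree unfolding g_def e_def by simp
    then show ?thesis using suminf_split_initial_segment[OF sg, of j] by simp
  qed
  finally have cd: "code \<alpha> - code \<beta> = (\<Sum>k. g (k + j))" .
  then show "\<bar>code \<alpha> - code \<beta>\<bar> \<le> 1/3^j" using tail_bound(2)[OF e, where m=j] unfolding g_def by simp
  assume ne: "\<alpha> j \<noteq> \<beta> j"
  have ej: "\<bar>e j\<bar> = 1" using ab[of j] ne unfolding e_def by auto
  have sgj: "summable (\<lambda>k. g (k + j))" using tail_bound(1)[OF e, where m=j] unfolding g_def by simp
  have "(\<Sum>k. g (Suc k + j)) = (\<Sum>k. g (k + j)) - g j"
    using suminf_split_head[OF sgj] by simp
  moreover have "\<bar>\<Sum>k. g (Suc k + j)\<bar> \<le> 1/3^Suc j"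
    using tail_bound(2)[OF e, where m="Suc j"] unfolding g_def by simp
  moreover have "\<bar>g j\<bar> = 2 / 3^Suc j" unfolding g_def using ej by (simp add: abs_mult)
  ultimately show "1/3^(Suc j) \<le> \<bar>code \<alpha> - code \<beta>\<bar>" unfolding cd by linarith
qed


lemma code_cons:
  assumes va: "valid \<alpha>" and i: "i \<in> {0,1}"
  shows "code (case_nat i \<alpha>) = 2 * real i / 3 + code \<alpha> / 3"
proof -
  have v: "valid (case_nat i \<alpha>)" using va i unfolding valid_def by (auto split: nat.splits)
  define f where "f n = 2 * real (case_nat i \<alpha> n) / 3 ^ Suc n" for n
  have sf: "summable f" using code_summable[OF v] unfolding f_def .
  have fs: "f (Suc n) = (2 * real (\<alpha> n) / 3 ^ Suc n) / 3" for n unfolding f_def by simp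
  have "(\<Sum>n. f (Suc n)) = code \<alpha> / 3"
    unfolding fs code_def by (rule suminf_divide[OF code_summable[OF va]])
  then have "code \<alpha> / 3 = code (case_nat i \<alpha>) - f 0"
    using suminf_split_head[OF sf] unfolding code_def f_def by simp
  moreover have "f 0 = 2 * real i / 3" by (simp add: f_def)
  ultimately show ?thesis by linarith
qed

lemma first_diff:
  assumes "\<alpha> \<noteq> (\<beta> :: nat \<Rightarrow> nat)"
  obtains j where "\<alpha> j \<noteq> \<beta> j" "\<forall>n<j. \<alpha> n = \<beta> n"
proof -
  obtain n where n: "\<alpha> n \<noteq> \<beta> n" using assms by blast
  define j where "j = (LEAST n. \<alpha> n \<noteq> \<beta> n)"
  have "\<alpha> j \<noteq> \<beta> j" unfolding j_def by (rule LeastI[of _ n]) (rule n)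
  moreover have "\<forall>m<j. \<alpha> m = \<beta> m" unfolding j_def using not_less_Least by blast
  ultimately show ?thesis using that by blast
qed

lemma haus_pos:
  assumes va: "valid \<alpha>" and vb: "valid \<beta>" and ne: "\<alpha> j \<noteq> \<beta> j" and agree: "\<forall>n<j. \<alpha> n = \<beta> n"
  shows "1/5^Suc j \<le> hausdist (Kp \<alpha>) (Kp \<beta>)"
proof (cases "\<alpha> j = 0")
  case True
  then show ?thesis using sep_Kp[OF agree True] ne by simp
next
  case False
  then have "\<beta> j = 0" using va vb ne unfolding valid_def by (metis insertE singletonD)
  moreover have "\<forall>n<j. \<beta> n = \<alpha> n" using agree by simp
  ultimately have "1/5^Suc j \<le> hausdist (Kp \<beta>) (Kp \<alpha>)" using sep_Kp[of j \<beta> \<alpha>] False by simp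
  then show ?thesis by (simp add: haus_comm)
qed

lemma Kinj:
  assumes va: "valid \<alpha>" and vb: "valid \<beta>" and eq: "Kp \<alpha> = Kp \<beta>"
  shows "\<alpha> = \<beta>"
proof (rule ccontr)
  assume "\<alpha> \<noteq> \<beta>"
  then obtain j where j: "\<alpha> j \<noteq> \<beta> j" "\<forall>n<j. \<alpha> n = \<beta> n" by (rule first_diff)
  have "1/5^Suc j \<le> hausdist (Kp \<alpha>) (Kp \<beta>)" by (rule haus_pos[OF va vb j])
  moreover have "hausdist (Kp \<alpha>) (Kp \<beta>) \<le> 0" unfolding eq by (rule haus_self[OF Kp_ne])
  moreover have "(0::real) < 1/5^Suc j" by simp
  ultimately show False by linarith
qed

lemma powr_calc: "(1/5^Suc j :: real) powr (ln 3 / ln 5) = 1/3^Suc j"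
proof -
  have l5: "ln (5::real) > 0" by simp
  have "ln ((5::real)^Suc j) = real (Suc j) * ln 5" by (rule ln_realpow)
  then have "ln (1/5^Suc j :: real) = - (real (Suc j) * ln 5)"
    by (simp add: ln_div)
  then have "(1/5^Suc j :: real) powr (ln 3 / ln 5) = exp (- (real (Suc j) * ln 3))"
    using l5 by (simp add: powr_def)
  also have "\<dots> = 1 / exp (real (Suc j) * ln 3)" by (simp add: exp_minus inverse_eq_divide)
  also have "exp (real (Suc j) * ln 3) = (3::real)^Suc j"
    by (subst exp_of_nat_mult) simp
  finally show ?thesis .
qed

lemma holder:
  assumes va: "valid \<alpha>" and vb: "valid \<beta>"
  shows "\<bar>code \<alpha> - code \<beta>\<bar> \<le> 3 * hausdist (Kp \<alpha>) (Kp \<beta>) powr (ln 3 / ln 5)"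
proof (cases "\<alpha> = \<beta>")
  case True then show ?thesis by simp
next
  case False
  then obtain j where j: "\<alpha> j \<noteq> \<beta> j" "\<forall>n<j. \<alpha> n = \<beta> n" by (rule first_diff)
  have "\<bar>code \<alpha> - code \<beta>\<bar> \<le> 1/3^j" by (rule code_diff(1)[OF va vb j(2)])
  also have "\<dots> = 3 * (1/3^Suc j)" by simp
  also have "\<dots> = 3 * (1/5^Suc j) powr (ln 3 / ln 5)" by (simp only: powr_calc)
  also have "\<dots> \<le> 3 * hausdist (Kp \<alpha>) (Kp \<beta>) powr (ln 3 / ln 5)"
    using haus_pos[OF va vb j] by (intro mult_left_mono powr_mono2) auto
  finally show ?thesis .
qed

lemma cont:
  assumes vb: "valid \<beta>" and e: "\<epsilon> > 0"
  shows "\<exists>\<delta>>0. \<forall>\<alpha>. valid \<alpha> \<longrightarrow> \<bar>code \<alpha> - code \<beta>\<bar> < \<delta> \<longrightarrow> hausdist (Kp \<alpha>) (Kp \<beta>) < \<epsilon>"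
proof -
  obtain n where n: "(1/5::real)^n < \<epsilon>/3" using real_arch_pow_inv[of "\<epsilon>/3" "1/5"] e by auto
  have "(0::real) < 1/3^Suc n" by simp
  moreover have "hausdist (Kp \<alpha>) (Kp \<beta>) < \<epsilon>" if va: "valid \<alpha>" and d: "\<bar>code \<alpha> - code \<beta>\<bar> < 1/3^Suc n" for \<alpha>
  proof (cases "\<alpha> = \<beta>")
    case True then show ?thesis using haus_self[OF Kp_ne, of \<beta>] e by simp
  next
    case False
    then obtain j where j: "\<alpha> j \<noteq> \<beta> j" "\<forall>n<j. \<alpha> n = \<beta> n" by (rule first_diff)
    have "1/3^Suc j \<le> \<bar>code \<alpha> - code \<beta>\<bar>" by (rule code_diff(2)[OF va vb j(2) j(1)])
    then have "(1::real)/3^Suc j < 1/3^Suc n" using d by linarith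
    then have "n < j"
      by (metis not_less Suc_le_mono one_le_numeral power_increasing divide_left_mono zero_less_power zero_less_numeral mult_pos_pos less_le_not_le zero_less_one)
    then have "\<forall>i<n. \<alpha> i = \<beta> i" using j(2) by simp
    then have "hausdist (Kp \<alpha>) (Kp \<beta>) \<le> 3/5^n" by (rule Kp_upper)
    also have "\<dots> = 3 * (1/5)^n" by (simp add: power_one_over)
    also have "\<dots> < \<epsilon>" using n by simp
    finally show ?thesis .
  qed
  ultimately show ?thesis by blast
qed


lemma Qcomp_eq: "Qcomp = {Kp \<alpha> | \<alpha>. valid \<alpha>}"
  unfolding Qcomp_def valid_def Kcomp_Kp ..

lemma QcompE: "A \<in> Qcomp \<Longrightarrow> (\<And>\<alpha>. valid \<alpha> \<Longrightarrow> A = Kp \<alpha> \<Longrightarrow> P) \<Longrightarrow> P"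
  unfolding Qcomp_eq by auto

lemma QcompI: "valid \<alpha> \<Longrightarrow> Kp \<alpha> \<in> Qcomp"
  unfolding Qcomp_eq by auto

lemma cantor_eq: "cantor_set = {code a | a. valid a}"
  unfolding cantor_set_def code_def valid_def ..


theorem theorem3:
  shows "(\<forall>A\<in>Qcomp. A \<noteq> {} \<and> compact A)
    \<and> Qcomp = Tmap 0 ` Qcomp \<union> Tmap 1 ` Qcomp
    \<and> (\<exists>\<phi> :: (real^3) set \<Rightarrow> real.
          bij_betw \<phi> Qcomp cantor_set
        \<and> (\<exists>c \<beta>. c > 0 \<and> \<beta> > 0 \<and>
             (\<forall>A\<in>Qcomp. \<forall>B\<in>Qcomp. \<bar>\<phi> A - \<phi> B\<bar> \<le> c * hausdist A B powr \<beta>))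
        \<and> (\<forall>B\<in>Qcomp. \<forall>\<epsilon>>0. \<exists>\<delta>>0. \<forall>A\<in>Qcomp.
             \<bar>\<phi> A - \<phi> B\<bar> < \<delta> \<longrightarrow> hausdist A B < \<epsilon>)
        \<and> (\<forall>A\<in>Qcomp. \<phi> (Tmap 0 A) = \<phi> A / 3 \<and> \<phi> (Tmap 1 A) = \<phi> A / 3 + 2 / 3))"
proof (intro conjI)
  show "\<forall>A\<in>Qcomp. A \<noteq> {} \<and> compact A" using Kp_ne Kp_compact by (metis QcompE)
  have vs: "valid (\<lambda>k. \<alpha> (Suc k))" if "valid \<alpha>" for \<alpha> using that unfolding valid_def by simp
  have vc: "valid (case_nat i \<alpha>)" if "valid \<alpha>" "i \<in> {0,1}" for \<alpha> i
  proof -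
    have "case_nat i \<alpha> n \<in> {0,1}" for n using that unfolding valid_def by (cases n) simp_all
    then show ?thesis unfolding valid_def by blast
  qed
  show "Qcomp = Tmap 0 ` Qcomp \<union> Tmap 1 ` Qcomp"
  proof
    show "Qcomp \<subseteq> Tmap 0 ` Qcomp \<union> Tmap 1 ` Qcomp"
    proof
      fix A assume "A \<in> Qcomp"
      then obtain \<alpha> where v: "valid \<alpha>" and A: "A = Kp \<alpha>" by (rule QcompE)
      have A': "A = Tmap (\<alpha> 0) (Kp (\<lambda>k. \<alpha> (Suc k)))" unfolding A by (rule Kp_head)
      have "Kp (\<lambda>k. \<alpha> (Suc k)) \<in> Qcomp" by (rule QcompI[OF vs[OF v]])
      moreover have "\<alpha> 0 = 0 \<or> \<alpha> 0 = 1" using v unfolding valid_def by simp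
      ultimately show "A \<in> Tmap 0 ` Qcomp \<union> Tmap 1 ` Qcomp"
      proof (elim disjE)
        assume "Kp (\<lambda>k. \<alpha> (Suc k)) \<in> Qcomp" "\<alpha> 0 = 0"
        then show ?thesis using A' by (intro UnI1 image_eqI[of _ _ "Kp (\<lambda>k. \<alpha> (Suc k))"]) simp_all
      next
        assume "Kp (\<lambda>k. \<alpha> (Suc k)) \<in> Qcomp" "\<alpha> 0 = 1"
        then show ?thesis using A' by (intro UnI2 image_eqI[of _ _ "Kp (\<lambda>k. \<alpha> (Suc k))"]) simp_all
      qed
    qed
  next
    show "Tmap 0 ` Qcomp \<union> Tmap 1 ` Qcomp \<subseteq> Qcomp"
    proof -
      have "Tmap i A \<in> Qcomp" if AQ: "A \<in> Qcomp" and i01: "i \<in> {0,1}" for A i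
      proof -
        obtain \<alpha> where v: "valid \<alpha>" and A: "A = Kp \<alpha>" using AQ by (rule QcompE)
        have "Tmap i A = Kp (case_nat i \<alpha>)" using A Tmap_Kp by simp
        then show ?thesis using QcompI[OF vc[OF v i01]] by simp
      qed
      note T = this
      show ?thesis
      proof
        fix x assume "x \<in> Tmap 0 ` Qcomp \<union> Tmap 1 ` Qcomp"
        then show "x \<in> Qcomp"
        proof (elim UnE imageE)
          fix A assume "x = Tmap 0 A" "A \<in> Qcomp" then show ?thesis using T[of A 0] by simp
        next
          fix A assume "x = Tmap 1 A" "A \<in> Qcomp" then show ?thesis using T[of A 1] by simp
        qed
      qed
    qed
  qed
  define \<phi> where "\<phi> A = code (SOME \<alpha>. valid \<alpha> \<and> A = Kp \<alpha>)" for A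
  have phi: "\<phi> (Kp \<alpha>) = code \<alpha>" if v: "valid \<alpha>" for \<alpha>
  proof -
    have "\<exists>\<alpha>'. valid \<alpha>' \<and> Kp \<alpha> = Kp \<alpha>'" using v by blast
    then have "valid (SOME \<alpha>'. valid \<alpha>' \<and> Kp \<alpha> = Kp \<alpha>') \<and> Kp \<alpha> = Kp (SOME \<alpha>'. valid \<alpha>' \<and> Kp \<alpha> = Kp \<alpha>')"
      by (rule someI_ex)
    then have "(SOME \<alpha>'. valid \<alpha>' \<and> Kp \<alpha> = Kp \<alpha>') = \<alpha>" using Kinj[OF _ v] by blast
    then show ?thesis unfolding \<phi>_def by simp
  qed
  show "\<exists>\<phi> :: (real^3) set \<Rightarrow> real.
          bij_betw \<phi> Qcomp cantor_set
        \<and> (\<exists>c \<beta>. c > 0 \<and> \<beta> > 0 \<and>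
             (\<forall>A\<in>Qcomp. \<forall>B\<in>Qcomp. \<bar>\<phi> A - \<phi> B\<bar> \<le> c * hausdist A B powr \<beta>))
        \<and> (\<forall>B\<in>Qcomp. \<forall>\<epsilon>>0. \<exists>\<delta>>0. \<forall>A\<in>Qcomp.
             \<bar>\<phi> A - \<phi> B\<bar> < \<delta> \<longrightarrow> hausdist A B < \<epsilon>)
        \<and> (\<forall>A\<in>Qcomp. \<phi> (Tmap 0 A) = \<phi> A / 3 \<and> \<phi> (Tmap 1 A) = \<phi> A / 3 + 2 / 3)"
  proof (rule exI[of _ \<phi>], intro conjI)
    show "bij_betw \<phi> Qcomp cantor_set"
      unfolding bij_betw_def
    proof
      show "inj_on \<phi> Qcomp"
      proof (rule inj_onI)
        fix A B assume AQ: "A \<in> Qcomp" and BQ: "B \<in> Qcomp" and eq: "\<phi> A = \<phi> B"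
        obtain \<alpha> where va: "valid \<alpha>" and A: "A = Kp \<alpha>" using AQ by (rule QcompE)
        obtain \<beta> where vb: "valid \<beta>" and B: "B = Kp \<beta>" using BQ by (rule QcompE)
        have c: "code \<alpha> = code \<beta>" using eq phi[OF va] phi[OF vb] A B by simp
        have "\<alpha> = \<beta>"
        proof (rule ccontr)
          assume "\<alpha> \<noteq> \<beta>"
          then obtain j where j: "\<alpha> j \<noteq> \<beta> j" "\<forall>n<j. \<alpha> n = \<beta> n" by (rule first_diff)
          have "1/3^Suc j \<le> \<bar>code \<alpha> - code \<beta>\<bar>" by (rule code_diff(2)[OF va vb j(2) j(1)])
          moreover have "(0::real) < 1/3^Suc j" by simp
          ultimately show False using c by linarith
        qed
        then show "A = B" using A B by simp
      qed
      show "\<phi> ` Qcomp = cantor_set"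
      proof
        show "\<phi> ` Qcomp \<subseteq> cantor_set"
        proof
          fix y assume "y \<in> \<phi> ` Qcomp"
          then obtain A where AQ: "A \<in> Qcomp" and y: "y = \<phi> A" by (rule imageE)
          obtain \<alpha> where va: "valid \<alpha>" and A: "A = Kp \<alpha>" using AQ by (rule QcompE)
          have "y = code \<alpha>" using y A phi[OF va] by simp
          then show "y \<in> cantor_set" unfolding cantor_eq using va by (intro CollectI exI conjI)
        qed
        show "cantor_set \<subseteq> \<phi> ` Qcomp"
        proof
          fix y assume "y \<in> cantor_set"
          then obtain \<alpha> where v: "valid \<alpha>" and y: "y = code \<alpha>" unfolding cantor_eq by (auto simp del: insert_iff)
          have "Kp \<alpha> \<in> Qcomp" by (rule QcompI[OF v])
          moreover have "y = \<phi> (Kp \<alpha>)" using phi[OF v] y by simp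
          ultimately show "y \<in> \<phi> ` Qcomp" by (rule rev_image_eqI)
        qed
      qed
    qed
    show "\<exists>c \<beta>. c > 0 \<and> \<beta> > 0 \<and> (\<forall>A\<in>Qcomp. \<forall>B\<in>Qcomp. \<bar>\<phi> A - \<phi> B\<bar> \<le> c * hausdist A B powr \<beta>)"
    proof (intro exI conjI)
      show "(3::real) > 0" by simp
      show "ln 3 / ln 5 > (0::real)" by simp
      show "\<forall>A\<in>Qcomp. \<forall>B\<in>Qcomp. \<bar>\<phi> A - \<phi> B\<bar> \<le> 3 * hausdist A B powr (ln 3 / ln 5)"
      proof (intro ballI)
        fix A B assume AQ: "A \<in> Qcomp" and BQ: "B \<in> Qcomp"
        obtain \<alpha> where va: "valid \<alpha>" and A: "A = Kp \<alpha>" using AQ by (rule QcompE)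
        obtain \<beta> where vb: "valid \<beta>" and B: "B = Kp \<beta>" using BQ by (rule QcompE)
        show "\<bar>\<phi> A - \<phi> B\<bar> \<le> 3 * hausdist A B powr (ln 3 / ln 5)"
          using holder[OF va vb] unfolding A B phi[OF va] phi[OF vb] .
      qed
    qed
    show "\<forall>B\<in>Qcomp. \<forall>\<epsilon>>0. \<exists>\<delta>>0. \<forall>A\<in>Qcomp. \<bar>\<phi> A - \<phi> B\<bar> < \<delta> \<longrightarrow> hausdist A B < \<epsilon>"
    proof (intro ballI allI impI)
      fix B and \<epsilon> :: real assume BQ: "B \<in> Qcomp" and "\<epsilon> > 0"
      obtain \<beta> where vb: "valid \<beta>" and B: "B = Kp \<beta>" using BQ by (rule QcompE)
      obtain \<delta> where d: "\<delta> > 0"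
        "\<forall>\<alpha>. valid \<alpha> \<longrightarrow> \<bar>code \<alpha> - code \<beta>\<bar> < \<delta> \<longrightarrow> hausdist (Kp \<alpha>) (Kp \<beta>) < \<epsilon>"
        using cont[OF vb \<open>\<epsilon> > 0\<close>] by blast
      show "\<exists>\<delta>>0. \<forall>A\<in>Qcomp. \<bar>\<phi> A - \<phi> B\<bar> < \<delta> \<longrightarrow> hausdist A B < \<epsilon>"
      proof (intro exI conjI ballI impI)
        show "\<delta> > 0" by (rule d(1))
        fix A assume AQ: "A \<in> Qcomp" and "\<bar>\<phi> A - \<phi> B\<bar> < \<delta>"
        obtain \<alpha> where va: "valid \<alpha>" and A: "A = Kp \<alpha>" using AQ by (rule QcompE)
        show "hausdist A B < \<epsilon>" using d(2) va \<open>\<bar>\<phi> A - \<phi> B\<bar> < \<delta>\<close> phi[OF va] phi[OF vb] A B by simp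
      qed
    qed
    show "\<forall>A\<in>Qcomp. \<phi> (Tmap 0 A) = \<phi> A / 3 \<and> \<phi> (Tmap 1 A) = \<phi> A / 3 + 2 / 3"
    proof
      fix A assume "A \<in> Qcomp"
      then obtain \<alpha> where va: "valid \<alpha>" and A: "A = Kp \<alpha>" by (rule QcompE)
      have "\<phi> (Tmap 0 A) = code (case_nat 0 \<alpha>)" unfolding A Tmap_Kp by (rule phi[OF vc[OF va]]) simp
      also have "\<dots> = \<phi> A / 3" using code_cons[OF va, of 0] phi[OF va] A by simp
      finally have "\<phi> (Tmap 0 A) = \<phi> A / 3" .
      moreover have "\<phi> (Tmap 1 A) = code (case_nat 1 \<alpha>)" unfolding A Tmap_Kp by (rule phi[OF vc[OF va]]) simp
      moreover have "code (case_nat 1 \<alpha>) = \<phi> A / 3 + 2/3" using code_cons[OF va, of 1] phi[OF va] A by simp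
      ultimately show "\<phi> (Tmap 0 A) = \<phi> A / 3 \<and> \<phi> (Tmap 1 A) = \<phi> A / 3 + 2 / 3" by simp
    qed
  qed
qed

end
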